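(* Let $k:(0,\infty)\to(0,\infty)$ be $C^1$, $K(X):=k(|X|)|X|^{-1}X$ for $X\in\mathbb{R}^N\setminus\{0\}$, $b(t):=k'(t)t/k(t)$, and let $X:\Omega\to\mathbb{R}^N\setminus\{0\}$ be $C^1$ on an open $\Omega\subset\mathbb{R}^n$. Let $A$ be a real $N\times N$ matrix and $0<\lambda\le\Lambda$ such that $\langle A\chi,\chi\rangle\ge\lambda|\chi|^2$ and $|A\chi|\le\Lambda|\chi|$ for all $\chi\in\mathbb{R}^{N\times n}$. Put $\kappa=\lambda/\Lambda^2$, $\nu=\lambda/\Lambda$. At every point where $b:=b(|X|)>0$, $$\langle\kappa A\,DX,D(K(X))\rangle\ge\big(\alpha^{1/2}-(1-\nu^2)^{1/2}\big)|DX||D(K(X))|,\qquad\alpha=1-\Big(\frac{b-1}{b+1}\Big)^2 .$$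
   Context: $DX$ denotes the $N\times n$ Jacobian matrix of $X$; for $\chi\in\mathbb{R}^{N\times n}$, $A\chi$ is the matrix product; for $N\times n$ matrices $P,Q$, $\langle P,Q\rangle=\sum_{a,j}P_{aj}Q_{aj}$ and $|P|=\langle P,P\rangle^{1/2}$. *)

theory Defs
  imports "HOL-Analysis.Analysis"
begin

text \<open>Frobenius inner product and norm on N x n matrices (type real^'n^'N: rows indexed by 'N).\<close>
definition frob_inner :: "real^'n^'m \<Rightarrow> real^'n^'m \<Rightarrow> real" where
  "frob_inner P Q = (\<Sum>a\<in>UNIV. \<Sum>j\<in>UNIV. P $ a $ j * Q $ a $ j)"

definition frob_norm :: "real^'n^'m \<Rightarrow> real" where
  "frob_norm P = sqrt (frob_inner P P)"

definition Kmap :: "(real \<Rightarrow> real) \<Rightarrow> real^'N \<Rightarrow> real^'N" where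
  "Kmap k X = (k (norm X) / norm X) *\<^sub>R X"

definition bfun :: "(real \<Rightarrow> real) \<Rightarrow> (real \<Rightarrow> real) \<Rightarrow> real \<Rightarrow> real" where
  "bfun k k' t = k' t * t / k t"

end

theory Submission
  imports Defs
begin

lemma Kmap_deriv:
  fixes Y :: "real^'N"
  assumes Y: "Y \<noteq> 0" and kd: "(k has_real_derivative d) (at (norm Y))"
  shows "(Kmap k has_derivative
     (\<lambda>v. (k (norm Y) / norm Y) *\<^sub>R v + ((d - k (norm Y) / norm Y) * (sgn Y \<bullet> v)) *\<^sub>R sgn Y)) (at Y)"
proof -
  let ?r = "norm Y"
  have r0: "?r \<noteq> 0" using Y by simp
  have h1: "((\<lambda>t. k t / t) has_real_derivative (d * ?r - k ?r * 1) / (?r * ?r)) (at ?r)"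
    by (rule DERIV_divide[OF kd DERIV_ident r0])
  have h2: "((\<lambda>t. k t / t) \<circ> norm has_derivative ((*) ((d * ?r - k ?r * 1) / (?r * ?r)) \<circ> (\<lambda>v. sgn Y \<bullet> v))) (at Y)"
    apply (rule diff_chain_at)
    using has_derivative_norm[OF Y] apply (simp add: inner_commute)
    using h1 unfolding has_field_derivative_def by simp
  have h3: "((\<lambda>Z. ((\<lambda>t. k t / t) \<circ> norm) Z *\<^sub>R Z) has_derivative
      (\<lambda>h. ((\<lambda>t. k t / t) \<circ> norm) Y *\<^sub>R h + ((*) ((d * ?r - k ?r * 1) / (?r * ?r)) \<circ> (\<lambda>v. sgn Y \<bullet> v)) h *\<^sub>R Y)) (at Y)"
    by (rule has_derivative_scaleR[OF h2 has_derivative_ident])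
  have h4: "((\<lambda>Z. (k (norm Z) / norm Z) *\<^sub>R Z) has_derivative
      (\<lambda>h. (k ?r / ?r) *\<^sub>R h + ((d * ?r - k ?r * 1) / (?r * ?r) * (sgn Y \<bullet> h)) *\<^sub>R Y)) (at Y)"
    using h3 by (simp add: o_def)
  show ?thesis
    unfolding Kmap_def[abs_def]
    apply (rule has_derivative_eq_rhs[OF h4])
    apply (rule ext)
    using r0 by (simp add: sgn_div_norm field_simps scaleR_add_right)
qed

lemma frob_inner_eq: "frob_inner P Q = P \<bullet> Q"
  by (simp add: frob_inner_def inner_vec_def)

lemma frob_norm_eq: "frob_norm P = norm P"
  by (simp add: frob_norm_def frob_inner_eq norm_eq_sqrt_inner)

lemma outer_lemma:
  fixes e :: "real^'N" and P :: "real^'n^'N"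
  assumes e1: "(\<Sum>i\<in>UNIV. e$i * e$i) = 1"
  defines "E \<equiv> (\<chi> i j. e$i * (\<Sum>l\<in>UNIV. e$l * P$l$j))"
  shows "E \<bullet> P = (\<Sum>j\<in>UNIV. (\<Sum>l\<in>UNIV. e$l * P$l$j)^2)"
    and "E \<bullet> E = (\<Sum>j\<in>UNIV. (\<Sum>l\<in>UNIV. e$l * P$l$j)^2)"
proof -
  show "E \<bullet> P = (\<Sum>j\<in>UNIV. (\<Sum>l\<in>UNIV. e$l * P$l$j)^2)"
    unfolding E_def inner_vec_def inner_real_def
    apply (subst sum.swap)
    apply (simp add: power2_eq_square sum_distrib_left sum_distrib_right mult_ac)
    done
  show "E \<bullet> E = (\<Sum>j\<in>UNIV. (\<Sum>l\<in>UNIV. e$l * P$l$j)^2)"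
  proof -
    have "E \<bullet> E = (\<Sum>i\<in>UNIV. \<Sum>j\<in>UNIV. (e$i * e$i) * (\<Sum>l\<in>UNIV. e$l * P$l$j)^2)"
      unfolding E_def inner_vec_def inner_real_def
      by (simp add: power2_eq_square mult_ac)
    also have "\<dots> = (\<Sum>j\<in>UNIV. (\<Sum>i\<in>UNIV. e$i * e$i) * (\<Sum>l\<in>UNIV. e$l * P$l$j)^2)"
      by (subst sum.swap) (simp add: sum_distrib_right)
    finally show ?thesis using e1 by simp
  qed
qed

lemma sqrt_alpha:
  fixes b :: real assumes "b > 0"
  shows "sqrt (1 - ((b - 1) / (b + 1))\<^sup>2) = 2 * sqrt b / (b + 1)"
proof -
  have "1 - ((b - 1) / (b + 1))\<^sup>2 = (2 * sqrt b / (b + 1))\<^sup>2"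
  proof -
    have a: "(2 * sqrt b / (b + 1))\<^sup>2 = 4 * b / (b + 1)\<^sup>2"
      using assms by (simp add: power_divide power_mult_distrib)
    have c: "1 - ((b - 1) / (b + 1))\<^sup>2 = 4 * b / (b + 1)\<^sup>2"
    proof -
      have hb: "(b + 1)\<^sup>2 \<noteq> 0" using assms by simp
      show ?thesis using hb by (simp add: power_divide field_simps) (simp add: power2_eq_square algebra_simps)
    qed
    show ?thesis using a c by simp
  qed
  thus ?thesis using assms by simp
qed

theorem lemma6p3:
  fixes k k' :: "real \<Rightarrow> real"
    and X :: "real^'n \<Rightarrow> real^'N"
    and \<Omega> :: "(real^'n) set"
    and A :: "real^'N^'N"
    and lam Lam :: real
    and x :: "real^'n"
  assumes k_pos: "\<And>t. t > 0 \<Longrightarrow> k t > 0"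
    and k_deriv: "\<And>t. t > 0 \<Longrightarrow> (k has_real_derivative k' t) (at t)"
    and k'_cont: "continuous_on {0<..} k'"
    and \<Omega>_open: "open \<Omega>"
    and X_nz: "\<And>y. y \<in> \<Omega> \<Longrightarrow> X y \<noteq> 0"
    and X_diff: "\<And>y. y \<in> \<Omega> \<Longrightarrow> X differentiable (at y)"
    and X_C1: "continuous_on \<Omega> (\<lambda>y. jacobian X (at y))"
    and lam_pos: "0 < lam" and lam_le: "lam \<le> Lam"
    and A_ell: "\<And>C::real^'n^'N. frob_inner (A ** C) C \<ge> lam * (frob_norm C)\<^sup>2"
    and A_bdd: "\<And>C::real^'n^'N. frob_norm (A ** C) \<le> Lam * frob_norm C"
    and x_in: "x \<in> \<Omega>"
    and b_pos: "bfun k k' (norm (X x)) > 0"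
  shows "frob_inner (((lam / Lam\<^sup>2) *\<^sub>R A) ** jacobian X (at x))
                    (jacobian (\<lambda>y. Kmap k (X y)) (at x))
         \<ge> (sqrt (1 - ((bfun k k' (norm (X x)) - 1) / (bfun k k' (norm (X x)) + 1))\<^sup>2)
             - sqrt (1 - (lam / Lam)\<^sup>2))
           * frob_norm (jacobian X (at x)) * frob_norm (jacobian (\<lambda>y. Kmap k (X y)) (at x))"
proof -
  let ?Y = "X x"
  define r where "r = norm ?Y"
  define e where "e = sgn ?Y"
  define a where "a = k' r"
  define g where "g = k r / r"
  define DX where "DX = frechet_derivative X (at x)"
  define P where "P = jacobian X (at x)"
  define Q where "Q = jacobian (\<lambda>y. Kmap k (X y)) (at x)"
  define b where "b = bfun k k' r"
  have Y0: "?Y \<noteq> 0" using X_nz x_in by simp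
  have r0: "r > 0" using Y0 r_def by simp
  have kr: "k r > 0" using k_pos r0 by simp
  have g0: "g > 0" using kr r0 g_def by simp
  have bdef: "b = a / g" using r0 kr by (simp add: b_def bfun_def a_def g_def)
  have b0: "b > 0" using b_pos by (simp add: b_def r_def)
  have a0: "a > 0" using b0 g0 bdef by (simp add: zero_less_divide_iff)
  have ab: "a = b * g" using bdef g0 by simp
  have e1: "(\<Sum>i\<in>UNIV. e$i * e$i) = 1"
  proof -
    have "norm e = 1" using Y0 by (simp add: e_def norm_sgn)
    hence "e \<bullet> e = 1" by (simp add: norm_eq_1)
    thus ?thesis by (simp add: inner_vec_def)
  qed
  have dX: "(X has_derivative DX) (at x)"
    using X_diff[OF x_in] by (simp add: DX_def frechet_derivative_works)
  have dK: "(Kmap k has_derivative (\<lambda>v. g *\<^sub>R v + ((a - g) * (e \<bullet> v)) *\<^sub>R e)) (at ?Y)"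
    using Kmap_deriv[OF Y0 k_deriv[OF r0[unfolded r_def]]]
    by (simp add: r_def g_def a_def e_def)
  have dKX: "((\<lambda>y. Kmap k (X y)) has_derivative (\<lambda>v. g *\<^sub>R v + ((a - g) * (e \<bullet> v)) *\<^sub>R e) \<circ> DX) (at x)"
    using diff_chain_at[OF dX dK] by (simp add: o_def)
  have fd: "frechet_derivative (\<lambda>y. Kmap k (X y)) (at x) = (\<lambda>v. g *\<^sub>R v + ((a - g) * (e \<bullet> v)) *\<^sub>R e) \<circ> DX"
    using frechet_derivative_at[OF dKX] by simp
  define E where "E = (\<chi> i j. e$i * (\<Sum>l\<in>UNIV. e$l * P$l$j))"
  have col: "DX (axis j 1) = (\<chi> i. P$i$j)" for j
    by (simp add: P_def DX_def jacobian_def matrix_def vec_eq_iff)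
  have QE: "Q = g *\<^sub>R P + (a - g) *\<^sub>R E"
    unfolding Q_def jacobian_def fd
    by (simp add: matrix_def vec_eq_iff col E_def inner_vec_def P_def[symmetric] mult_ac)
  define S where "S = (\<Sum>j\<in>UNIV. (\<Sum>l\<in>UNIV. e$l * P$l$j)^2)"
  have EP: "E \<bullet> P = S" and EE: "E \<bullet> E = S"
    using outer_lemma[OF e1, of P] by (simp_all add: E_def S_def)
  have PQ: "P \<bullet> Q = g * (P \<bullet> P) + (a - g) * S"
    by (simp add: QE inner_add_right EP inner_commute)
  have QQ: "Q \<bullet> Q = g^2 * (P \<bullet> P) + 2 * g * (a - g) * S + (a - g)^2 * S"
    by (simp add: QE inner_add_right inner_add_left EP EE inner_commute power2_eq_square algebra_simps)
  have ident: "(a + g) * (P \<bullet> Q) = (Q \<bullet> Q) + a * g * (P \<bullet> P)"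
    by (simp add: PQ QQ power2_eq_square algebra_simps)
  have amgm: "2 * sqrt b * g * (norm P * norm Q) \<le> (Q \<bullet> Q) + a * g * (P \<bullet> P)"
  proof -
    have sq: "(norm Q - sqrt b * g * norm P)^2 \<ge> 0" by simp
    have "(sqrt b)^2 = b" using b0 by simp
    hence "(norm Q - sqrt b * g * norm P)^2 = (Q \<bullet> Q) + a * g * (P \<bullet> P) - 2 * sqrt b * g * (norm P * norm Q)"
      by (simp add: power2_eq_square algebra_simps ab flip: power2_norm_eq_inner)
    thus ?thesis using sq by linarith
  qed
  have main1: "2 * sqrt b / (b + 1) * (norm P * norm Q) \<le> P \<bullet> Q"
  proof -
    have "(b + 1) * g * (2 * sqrt b / (b + 1) * (norm P * norm Q)) = 2 * sqrt b * g * (norm P * norm Q)"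
      using b0 by (simp add: field_simps)
    also have "\<dots> \<le> (a + g) * (P \<bullet> Q)" using amgm ident by simp
    also have "\<dots> = (b + 1) * g * (P \<bullet> Q)" by (simp add: ab algebra_simps)
    finally have "2 * (sqrt b * (norm P * norm Q)) \<le> (b + 1) * (P \<bullet> Q)"
      using b0 g0 by (simp add: mult_le_cancel_left_pos)
    thus ?thesis using b0 by (simp add: pos_divide_le_eq mult_ac)
  qed
  define kap where "kap = lam / Lam\<^sup>2"
  have Lam0: "Lam > 0" using lam_pos lam_le by simp
  define R where "R = kap *\<^sub>R (A ** P) - P"
  have ell: "(A ** P) \<bullet> P \<ge> lam * (norm P)^2" using A_ell[of P] by (simp add: frob_inner_eq frob_norm_eq)
  have bdd: "norm (A ** P) \<le> Lam * norm P" using A_bdd[of P] by (simp add: frob_norm_eq)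
  have kap0: "kap \<ge> 0" using lam_pos Lam0 by (simp add: kap_def)
  have RR: "(norm R)^2 \<le> (1 - (lam / Lam)\<^sup>2) * (norm P)^2"
  proof -
    have "(norm R)^2 = kap^2 * (norm (A ** P))^2 - 2 * kap * ((A ** P) \<bullet> P) + (norm P)^2"
      by (simp only: R_def power2_norm_eq_inner) (simp add: inner_diff_left inner_diff_right inner_commute power2_eq_square algebra_simps)
    also have "\<dots> \<le> kap^2 * (Lam * norm P)^2 - 2 * kap * (lam * (norm P)^2) + (norm P)^2"
    proof -
      have "(norm (A ** P))^2 \<le> (Lam * norm P)^2" using bdd by (simp add: power_mono)
      hence "kap^2 * (norm (A ** P))^2 \<le> kap^2 * (Lam * norm P)^2" by (simp add: mult_left_mono)
      moreover have "2 * kap * (lam * (norm P)^2) \<le> 2 * kap * ((A ** P) \<bullet> P)"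
        using ell kap0 by (simp add: mult_left_mono)
      ultimately show ?thesis by linarith
    qed
    also have "\<dots> = (1 - (lam / Lam)\<^sup>2) * (norm P)^2"
      using Lam0 by (simp add: kap_def power2_eq_square field_simps)
    finally show ?thesis .
  qed
  have nu: "1 - (lam / Lam)\<^sup>2 \<ge> 0"
  proof -
    have "lam / Lam \<le> 1" using lam_le Lam0 by simp
    moreover have "lam / Lam \<ge> 0" using lam_pos Lam0 by simp
    ultimately have "(lam / Lam)\<^sup>2 \<le> 1" by (simp add: power_le_one)
    thus ?thesis by simp
  qed
  have Rn: "norm R \<le> sqrt (1 - (lam / Lam)\<^sup>2) * norm P"
  proof -
    have "norm R = sqrt ((norm R)^2)" by simp
    also have "\<dots> \<le> sqrt ((1 - (lam / Lam)\<^sup>2) * (norm P)^2)" using RR by (simp only: real_sqrt_le_iff)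
    also have "\<dots> = sqrt (1 - (lam / Lam)\<^sup>2) * norm P" by (simp add: real_sqrt_mult)
    finally show ?thesis .
  qed
  have RQ: "R \<bullet> Q \<ge> - (sqrt (1 - (lam / Lam)\<^sup>2) * norm P * norm Q)"
  proof -
    have "\<bar>R \<bullet> Q\<bar> \<le> norm R * norm Q" by (rule Cauchy_Schwarz_ineq2)
    also have "\<dots> \<le> sqrt (1 - (lam / Lam)\<^sup>2) * norm P * norm Q" using Rn by (simp add: mult_right_mono)
    finally show ?thesis by linarith
  qed
  have lhs: "((kap *\<^sub>R A) ** P) \<bullet> Q = P \<bullet> Q + R \<bullet> Q"
    by (simp add: R_def scalar_matrix_assoc[symmetric] inner_diff_left)
  have alpha: "sqrt (1 - ((b - 1) / (b + 1))\<^sup>2) = 2 * sqrt b / (b + 1)" using sqrt_alpha[OF b0] .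
  show ?thesis
    unfolding frob_inner_eq frob_norm_eq
    using lhs main1 RQ alpha
    by (simp add: kap_def P_def[symmetric] Q_def[symmetric] b_def[symmetric] r_def[symmetric] algebra_simps)
qed

end
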